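(* Fix a total number $N_{\text{total}} > 0$ of collected data samples, split into $E_N = N_{\text{total}}/E_L$ episodes each of fixed length $E_L \in \{1,2,\dots\}$. Let $P_s(l)$ be the probability that the state at interaction step $l$ of an episode is secure, where $P_s$ does not depend on $E_L$, and define the expected number of secure state visits over all episodes as \[ N_s(E_L) = \frac{N_{\text{total}}}{E_L}\sum_{l=1}^{E_L} P_s(l). \] Then $N_s$ remains constant or increases when $E_L$ is reduced; that is, $N_s(E_L+1) \le N_s(E_L)$ for every $E_L \ge 1$.
   Context: A dead-end state is a state from which, once reached at some step of a trajectory, no policy can lead to the goal state at any later step; a secure state is a state that is not a dead-end state. The dead-end set is absorbing along trajectories (once in a dead-end state, all subsequent states are dead-end states), so that $P_s(l) = \prod_{k=1}^{l}(1-P_d(k))$ with $P_d(k) \in [0,1]$ the probability of falling into a dead-end state at step $k$; in particular $P_s$ is a non-increasing function of the interaction step $l$. *)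

theory Defs
  imports Complex_Main
begin

text \<open>Probability of being in a secure state at interaction step l, given
  the per-step probabilities Pd k of falling into a dead-end state.\<close>
definition Ps :: "(nat \<Rightarrow> real) \<Rightarrow> nat \<Rightarrow> real" where
  "Ps Pd l = (\<Prod>k = 1..l. 1 - Pd k)"

definition Ns :: "real \<Rightarrow> (nat \<Rightarrow> real) \<Rightarrow> nat \<Rightarrow> real" where
  "Ns Ntotal P EL = Ntotal / real EL * (\<Sum>l = 1..EL. P l)"

end

theory Submission
  imports Defs
begin

lemma Ps_nonneg: assumes "\<And>k. 0 \<le> Pd k \<and> Pd k \<le> 1" shows "0 \<le> Ps Pd l"
  unfolding Ps_def using assms by (intro prod_nonneg) auto

lemma Ps_Suc: "Ps Pd (Suc l) = Ps Pd l * (1 - Pd (Suc l))"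
  unfolding Ps_def by (simp add: prod.nat_ivl_Suc' mult.commute)

lemma Ps_mono: assumes "\<And>k. 0 \<le> Pd k \<and> Pd k \<le> 1" and "l \<le> m"
  shows "Ps Pd m \<le> Ps Pd l"
  using assms(2)
proof (induction m rule: dec_induct)
  case base then show ?case by simp
next
  case (step q)
  have "Ps Pd (Suc q) \<le> Ps Pd q"
    unfolding Ps_Suc using Ps_nonneg[where l=q, OF assms(1)] assms(1)[of "Suc q"]
    by (simp add: mult_left_le)
  then show ?case using step by linarith
qed

theorem theorem1:
  fixes Ntotal :: real and Pd :: "nat \<Rightarrow> real" and EL :: nat
  assumes "Ntotal > 0"
    and "\<And>k. 0 \<le> Pd k \<and> Pd k \<le> 1"
    and "EL \<ge> 1"
  shows "Ns Ntotal (Ps Pd) (EL + 1) \<le> Ns Ntotal (Ps Pd) EL"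
proof -
  define S where "S = (\<Sum>l = 1..EL. Ps Pd l)"
  have S1: "(\<Sum>l = 1..EL+1. Ps Pd l) = S + Ps Pd (EL+1)"
    unfolding S_def by simp
  have "(\<Sum>l = 1..EL. Ps Pd (EL+1)) \<le> S"
    unfolding S_def by (intro sum_mono Ps_mono[OF assms(2)]) auto
  hence key: "real EL * Ps Pd (EL+1) \<le> S" by simp
  have "(S + Ps Pd (EL+1)) / real (EL+1) \<le> S / real EL"
    using key assms(3) by (simp add: divide_simps algebra_simps)
  hence "Ntotal * ((S + Ps Pd (EL+1)) / real (EL+1)) \<le> Ntotal * (S / real EL)"
    using assms(1) by (intro mult_left_mono) auto
  thus ?thesis unfolding Ns_def S1 by (simp add: S_def)
qed

end
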